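(* For every $k\ge1$ (with no restriction $k\le n$), in $\mathbb{Q}[S_n]$, \[B_1^k=\sum_{j=1}^{\min(k,n)} S_{k,j}\,B_j,\] where $S_{k,j}$ is the Stirling number of the second kind.
   Context: Elements of $S_n$ are written in deck notation: a word $c_1\cdots c_n$ (a rearrangement of $1,\ldots,n$) is the deck with card $c_i$ in position $i$. Multiplication in $\mathbb{Q}[S_n]$: for $\sigma=c_1\cdots c_n$, $\tau=d_1\cdots d_n$, $\sigma\tau=c_{d_1}\cdots c_{d_n}$, extended bilinearly. For $a\in[n]$, $B_a$ is the sum of all words $c_1\cdots c_n\in S_n$ in which the letters $a+1,\ldots,n$ appear in increasing order from left to right. *)

theory Defs
  imports "HOL-Combinatorics.Combinatorics"
begin

text \<open>A permutation in S_n is a function p :: nat => nat with p permutes {1..n};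
  in deck notation c_1...c_n we have c_i = p i. The deck product
  sigma tau = c_(d_1) ... c_(d_n) is function composition sigma o tau.
  Elements of Q[S_n] are functions from permutations to rat (coefficients),
  zero outside S_n.\<close>

definition perms :: "nat \<Rightarrow> (nat \<Rightarrow> nat) set" where
  "perms n = {p. p permutes {1..n}}"

definition gmult :: "nat \<Rightarrow> ((nat \<Rightarrow> nat) \<Rightarrow> rat) \<Rightarrow> ((nat \<Rightarrow> nat) \<Rightarrow> rat) \<Rightarrow> ((nat \<Rightarrow> nat) \<Rightarrow> rat)" where
  "gmult n f g = (\<lambda>x. \<Sum>\<sigma>\<in>perms n. \<Sum>\<tau>\<in>perms n. if \<sigma> \<circ> \<tau> = x then f \<sigma> * g \<tau> else 0)"

definition gone :: "(nat \<Rightarrow> nat) \<Rightarrow> rat" where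
  "gone = (\<lambda>x. if x = id then 1 else 0)"

primrec gpow :: "nat \<Rightarrow> ((nat \<Rightarrow> nat) \<Rightarrow> rat) \<Rightarrow> nat \<Rightarrow> ((nat \<Rightarrow> nat) \<Rightarrow> rat)" where
  "gpow n f 0 = gone"
| "gpow n f (Suc k) = gmult n f (gpow n f k)"

definition B :: "nat \<Rightarrow> nat \<Rightarrow> (nat \<Rightarrow> nat) \<Rightarrow> rat" where
  "B n a = (\<lambda>\<sigma>. if \<sigma> \<in> perms n \<and>
      (\<forall>i j. 1 \<le> i \<and> i < j \<and> j \<le> n \<and> a < \<sigma> i \<and> a < \<sigma> j \<longrightarrow> \<sigma> i < \<sigma> j)
     then 1 else 0)"

end

theory Submission
  imports Defs
begin

definition incr :: "(nat \<Rightarrow> nat) \<Rightarrow> nat \<Rightarrow> nat \<Rightarrow> bool" where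
  "incr r a n = (\<forall>u v. a < u \<and> u < v \<and> v \<le> n \<longrightarrow> r u < r v)"

lemma Bchar:
  assumes s: "s permutes {1..n}"
  shows "B n a s = (if incr (inv s) a n then 1 else 0)"
proof -
  have "(\<forall>i j. 1 \<le> i \<and> i < j \<and> j \<le> n \<and> a < s i \<and> a < s j \<longrightarrow> s i < s j) \<longleftrightarrow> incr (inv s) a n"
  proof
    assume H: "\<forall>i j. 1 \<le> i \<and> i < j \<and> j \<le> n \<and> a < s i \<and> a < s j \<longrightarrow> s i < s j"
    show "incr (inv s) a n"
      unfolding incr_def
    proof (intro allI impI)
      fix u v assume uv: "a < u \<and> u < v \<and> v \<le> n"
      define i where "i = inv s u"
      define j where "j = inv s v"
      have si: "s i = u" "s j = v" using permutes_inverses(1)[OF s] i_def j_def by auto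
      have "u \<in> {1..n}" "v \<in> {1..n}" using uv by auto
      hence ij: "i \<in> {1..n}" "j \<in> {1..n}" using permutes_in_image[OF s] si by auto
      have "i \<noteq> j" using si uv by auto
      moreover have "\<not> j < i"
      proof
        assume ji: "j < i"
        have "1 \<le> j \<and> j < i \<and> i \<le> n \<and> a < s j \<and> a < s i" using ji ij si uv by auto
        hence "s j < s i" using H by blast
        thus False using si uv by simp
      qed
      ultimately show "inv s u < inv s v" unfolding i_def[symmetric] j_def[symmetric] by simp
    qed
  next
    assume H: "incr (inv s) a n"
    show "\<forall>i j. 1 \<le> i \<and> i < j \<and> j \<le> n \<and> a < s i \<and> a < s j \<longrightarrow> s i < s j"
    proof (intro allI impI)
      fix i j assume ij: "1 \<le> i \<and> i < j \<and> j \<le> n \<and> a < s i \<and> a < s j"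
      have "i \<in> {1..n}" "j \<in> {1..n}" using ij by auto
      hence sij: "s i \<in> {1..n}" "s j \<in> {1..n}" using permutes_in_image[OF s] by auto
      have "s i \<noteq> s j" using ij permutes_inj[OF s] unfolding inj_def by auto
      moreover have "\<not> s j < s i"
      proof
        assume "s j < s i"
        hence "a < s j \<and> s j < s i \<and> s i \<le> n" using ij sij by auto
        hence "inv s (s j) < inv s (s i)" using H unfolding incr_def by blast
        thus False using ij permutes_inverses(2)[OF s] by simp
      qed
      ultimately show "s i < s j" by simp
    qed
  qed
  thus ?thesis using s unfolding B_def perms_def by simp
qed

lemma finite_perms: "finite (perms n)"
  unfolding perms_def by (simp add: finite_permutations)

lemma inner_delta:
  assumes x: "x \<in> perms n" and s: "s \<in> perms n"
  shows "(\<Sum>\<tau>\<in>perms n. if s \<circ> \<tau> = x then f s * g \<tau> else 0) = f s * g (inv s \<circ> x)"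
proof -
  have sp: "s permutes {1..n}" using s perms_def by simp
  have eq: "(s \<circ> \<tau> = x) = (\<tau> = inv s \<circ> x)" for \<tau>
  proof
    assume "s \<circ> \<tau> = x"
    hence "inv s \<circ> (s \<circ> \<tau>) = inv s \<circ> x" by simp
    thus "\<tau> = inv s \<circ> x" by (simp add: o_assoc permutes_inv_o(2)[OF sp])
  next
    assume "\<tau> = inv s \<circ> x"
    thus "s \<circ> \<tau> = x" by (simp add: o_assoc permutes_inv_o(1)[OF sp])
  qed
  have mem: "inv s \<circ> x \<in> perms n"
    using x sp unfolding perms_def by (simp add: permutes_compose permutes_inv)
  show ?thesis unfolding eq using mem finite_perms by (simp add: sum.delta')
qed

lemma gmult_left:
  assumes x: "x \<in> perms n"
  shows "gmult n f g x = (\<Sum>r\<in>perms n. f (inv r) * g (r \<circ> x))"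
proof -
  have "gmult n f g x = (\<Sum>s\<in>perms n. f s * g (inv s \<circ> x))"
    unfolding gmult_def by (rule sum.cong[OF refl], rule inner_delta[OF x])
  also have "\<dots> = (\<Sum>r\<in>perms n. f (inv r) * g (r \<circ> x))"
    by (rule sum.reindex_bij_witness[where i=inv and j=inv])
       (auto simp: perms_def permutes_inv_inv permutes_inv)
  finally show ?thesis .
qed

lemma gmult_out:
  assumes x: "x \<notin> perms n"
  shows "gmult n f g x = 0"
proof -
  have "s \<circ> t \<noteq> x" if "s \<in> perms n" "t \<in> perms n" for s t
    using that x by (auto simp: perms_def permutes_compose)
  thus ?thesis unfolding gmult_def by (auto intro!: sum.neutral)
qed

lemma B_out: "x \<notin> perms n \<Longrightarrow> B n a x = 0"
  by (simp add: B_def)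
definition ins :: "nat \<Rightarrow> nat \<Rightarrow> nat" where
  "ins p m = (if m = p then 1 else if 1 \<le> m \<and> m < p then m + 1 else m)"

definition insinv :: "nat \<Rightarrow> nat \<Rightarrow> nat" where
  "insinv p m = (if m = 1 then p else if 2 \<le> m \<and> m \<le> p then m - 1 else m)"

lemma ins_insinv: "1 \<le> p \<Longrightarrow> ins p (insinv p m) = m"
  by (auto simp: ins_def insinv_def)

lemma insinv_ins: "1 \<le> p \<Longrightarrow> insinv p (ins p m) = m"
  by (auto simp: ins_def insinv_def)

lemma insinv_permutes:
  assumes p: "p \<in> {1..n}"
  shows "insinv p permutes {1..n}"
proof (rule bij_imp_permutes)
  show "bij_betw (insinv p) {1..n} {1..n}"
    by (rule bij_betw_byWitness[where f'="ins p"]) 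
       (use p in \<open>auto simp: ins_insinv insinv_ins\<close>, auto simp: ins_def insinv_def)
  show "insinv p x = x" if "x \<notin> {1..n}" for x
    using that p by (auto simp: insinv_def)
qed

lemma inv_insinv:
  assumes p: "p \<in> {1..n}"
  shows "inv (insinv p) = ins p"
proof
  fix m show "inv (insinv p) m = ins p m"
    using permutes_inv_eq[OF insinv_permutes[OF p]] insinv_ins p by simp
qed

lemma L:
  assumes r: "r permutes {1..n}" and inc: "incr r 1 n" and m: "m \<in> {2..n}"
  shows "r m = (if m \<le> r 1 then m - 1 else m)"
proof -
  let ?p = "r 1"
  have rin: "r i \<in> {1..n}" if "i \<in> {1..n}" for i using that permutes_in_image[OF r] by simp
  have injr: "inj r" using permutes_inj[OF r] .
  have rm: "r m \<in> {1..n}" using rin m by simp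
  define A where "A = {i\<in>{1..n}. r i < r m}"
  have imgA: "r ` A = {1..<r m}"
  proof
    show "r ` A \<subseteq> {1..<r m}" using rin A_def by auto
    show "{1..<r m} \<subseteq> r ` A"
    proof
      fix v assume v: "v \<in> {1..<r m}"
      hence vn: "v \<in> {1..n}" using rm by auto
      have "inv r v \<in> {1..n}" using vn permutes_in_image[OF permutes_inv[OF r]] by simp
      moreover have "r (inv r v) = v" using permutes_inverses(1)[OF r] .
      ultimately show "v \<in> r ` A" using v A_def by (metis (mono_tags, lifting) atLeastLessThan_iff image_eqI mem_Collect_eq)
    qed
  qed
  have cardA: "card A = r m - 1"
    using imgA card_image[OF inj_on_subset[OF injr]] by (metis card_atLeastLessThan subset_UNIV)
  have Aeq: "A = {2..<m} \<union> (if ?p < r m then {1} else {})"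
  proof -
    have "i \<in> A \<longleftrightarrow> i \<in> {2..<m} \<union> (if ?p < r m then {1} else {})" for i
    proof (cases "i = 1")
      case True thus ?thesis using A_def m by auto
    next
      case False
      show ?thesis
      proof
        assume "i \<in> A"
        hence i: "i \<in> {1..n}" "r i < r m" using A_def by auto
        have "i < m"
        proof (rule ccontr)
          assume "\<not> i < m"
          hence "m \<le> i" by simp
          moreover have "i \<noteq> m" using i by auto
          ultimately have "r m < r i" using inc i m unfolding incr_def by auto
          thus False using i by simp
        qed
        thus "i \<in> {2..<m} \<union> (if ?p < r m then {1} else {})" using False i by auto
      next
        assume "i \<in> {2..<m} \<union> (if ?p < r m then {1} else {})"
        hence "i \<in> {2..<m}" using False by (auto split: if_splits)
        thus "i \<in> A" using inc m unfolding incr_def A_def by auto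
      qed
    qed
    thus ?thesis by blast
  qed
  have "card A = (m - 2) + (if ?p < r m then 1 else 0)"
    unfolding Aeq by (auto simp: card_Un_disjoint)
  hence eq: "r m - 1 = (m - 2) + (if ?p < r m then 1 else 0)" using cardA by simp
  have ne: "?p \<noteq> r m" using injr m by (metis atLeastAtMost_iff inj_eq numeral_le_one_iff semiring_norm(69))
  show ?thesis using eq ne m rm by (auto split: if_splits)
qed

lemma R1: assumes n: "1 \<le> n" shows "{r\<in>perms n. incr r 1 n} = insinv ` {1..n}"
proof
  show "insinv ` {1..n} \<subseteq> {r\<in>perms n. incr r 1 n}"
  proof
    fix r assume "r \<in> insinv ` {1..n}"
    then obtain p where p: "p \<in> {1..n}" and r: "r = insinv p" by auto
    have "incr r 1 n" unfolding incr_def r insinv_def by auto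
    thus "r \<in> {r\<in>perms n. incr r 1 n}" using insinv_permutes[OF p] r perms_def by simp
  qed
  show "{r\<in>perms n. incr r 1 n} \<subseteq> insinv ` {1..n}"
  proof
    fix r assume "r \<in> {r\<in>perms n. incr r 1 n}"
    hence r: "r permutes {1..n}" and inc: "incr r 1 n" by (auto simp: perms_def)
    have pn: "r 1 \<in> {1..n}" if "1 \<le> n" using permutes_in_image[OF r] that by simp
    have "r = insinv (r 1)"
    proof
      fix m show "r m = insinv (r 1) m"
      proof (cases "m \<in> {2..n}")
        case True thus ?thesis using L[OF r inc True] by (auto simp: insinv_def)
      next
        case False
        show ?thesis
        proof (cases "m = 1")
          case True thus ?thesis by (simp add: insinv_def)
        next
          case F1: False
          hence "m \<notin> {1..n}" using False by auto
          hence "r m = m" using permutes_not_in[OF r] by simp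
          moreover have "insinv (r 1) m = m"
          proof (cases "1 \<le> n")
            case True thus ?thesis using pn \<open>m \<notin> {1..n}\<close> F1 by (auto simp: insinv_def)
          next
            case False
            hence "r 1 = 1" using permutes_not_in[OF r] by simp
            thus ?thesis by (simp add: insinv_def)
          qed
          ultimately show ?thesis by simp
        qed
      qed
    qed
    thus "r \<in> insinv ` {1..n}" using pn n by auto
  qed
qed


lemma ins_big: "1 \<le> u \<Longrightarrow> ins p u = (if u = p then 1 else if u < p then Suc u else u)"
  by (auto simp: ins_def)

lemma char_big:
  assumes j: "1 \<le> j" "j < p" "p \<le> n"
  shows "incr (\<xi> \<circ> ins p) j n \<longleftrightarrow>
     incr \<xi> (Suc j) n \<and> (p = Suc j \<or> \<xi> p < \<xi> 1) \<and> (p = n \<or> \<xi> 1 < \<xi> (Suc p))"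
proof
  assume H: "incr (\<xi> \<circ> ins p) j n"
  have H': "\<xi> (ins p u) < \<xi> (ins p v)" if "j < u" "u < v" "v \<le> n" for u v
    using H that unfolding incr_def by auto
  have a: "incr \<xi> (Suc j) n" unfolding incr_def
  proof (intro allI impI)
    fix u v assume uv: "Suc j < u \<and> u < v \<and> v \<le> n"
    define u' where "u' = (if u \<le> p then u - 1 else u)"
    define v' where "v' = (if v \<le> p then v - 1 else v)"
    have 1: "j < u'" "u' < v'" "v' \<le> n" using uv j unfolding u'_def v'_def by auto
    have 2: "ins p u' = u" "ins p v' = v" using uv j unfolding u'_def v'_def ins_def by auto
    show "\<xi> u < \<xi> v" using H'[OF 1] 2 by simp
  qed
  have b: "\<xi> p < \<xi> 1" if "p \<noteq> Suc j"
  proof -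
    note that
    hence "j < p - 1" "p - 1 < p" using j by auto
    have e: "ins p (p - 1) = p" "ins p p = 1" using j by (auto simp: ins_def)
    have "\<xi> (ins p (p - 1)) < \<xi> (ins p p)" by (rule H') (use \<open>j < p - 1\<close> \<open>p - 1 < p\<close> j(3) in auto)
    thus "\<xi> p < \<xi> 1" unfolding e .
  qed
  have c: "\<xi> 1 < \<xi> (Suc p)" if "p \<noteq> n"
  proof -
    note that
    hence "j < p" "p < Suc p" "Suc p \<le> n" using j by auto
    from H'[OF this] show "\<xi> 1 < \<xi> (Suc p)" by (simp add: ins_def)
  qed
  show "incr \<xi> (Suc j) n \<and> (p = Suc j \<or> \<xi> p < \<xi> 1) \<and> (p = n \<or> \<xi> 1 < \<xi> (Suc p))"
    using a b c by auto
next
  assume "incr \<xi> (Suc j) n \<and> (p = Suc j \<or> \<xi> p < \<xi> 1) \<and> (p = n \<or> \<xi> 1 < \<xi> (Suc p))"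
  hence I: "\<And>u v. Suc j < u \<Longrightarrow> u < v \<Longrightarrow> v \<le> n \<Longrightarrow> \<xi> u < \<xi> v"
    and b: "p = Suc j \<or> \<xi> p < \<xi> 1" and c: "p = n \<or> \<xi> 1 < \<xi> (Suc p)"
    unfolding incr_def by auto
  have Ile: "\<xi> u \<le> \<xi> v" if "Suc j < u" "u \<le> v" "v \<le> n" for u v
    using I[of u v] that by (cases "u = v") auto
  show "incr (\<xi> \<circ> ins p) j n" unfolding incr_def
  proof (intro allI impI)
    fix u v assume uv: "j < u \<and> u < v \<and> v \<le> n"
    have u1: "1 \<le> u" "1 \<le> v" using uv j by auto
    show "(\<xi> \<circ> ins p) u < (\<xi> \<circ> ins p) v"
    proof (cases "u < p")
      case True
      hence iu: "ins p u = Suc u" using ins_big[OF u1(1)] by simp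
      show ?thesis
      proof (cases "v < p")
        case True
        thus ?thesis using iu ins_big[OF u1(2)] I[of "Suc u" "Suc v"] uv j by simp
      next
        case False
        show ?thesis
        proof (cases "v = p")
          case True
          hence "p \<noteq> Suc j" using uv \<open>u < p\<close> by auto
          hence "\<xi> p < \<xi> 1" using b by simp
          moreover have "\<xi> (Suc u) \<le> \<xi> p" using Ile[of "Suc u" p] uv \<open>u < p\<close> j by simp
          ultimately show ?thesis using iu True by (simp add: ins_def)
        next
          case False
          hence "p < v" using \<open>\<not> v < p\<close> by simp
          hence "ins p v = v" using ins_big[OF u1(2)] by simp
          moreover have "\<xi> (Suc u) < \<xi> v" using I[of "Suc u" v] uv \<open>u < p\<close> \<open>p < v\<close> by simp
          ultimately show ?thesis using iu by simp
        qed
      qed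
    next
      case False
      show ?thesis
      proof (cases "u = p")
        case True
        hence iu: "ins p u = 1" by (simp add: ins_def)
        have "p \<noteq> n" using True uv by simp
        hence "\<xi> 1 < \<xi> (Suc p)" using c by simp
        moreover have "\<xi> (Suc p) \<le> \<xi> v" using Ile[of "Suc p" v] uv True j by simp
        moreover have "ins p v = v" using ins_big[OF u1(2)] uv True by simp
        ultimately show ?thesis using iu by simp
      next
        case False
        hence "p < u" using \<open>\<not> u < p\<close> by simp
        hence "ins p u = u" "ins p v = v" using ins_big[OF u1(1)] ins_big[OF u1(2)] uv by auto
        thus ?thesis using I[of u v] uv \<open>p < u\<close> j by simp
      qed
    qed
  qed
qed


lemma count_big:
  assumes xi: "\<xi> permutes {1..n}" and j: "1 \<le> j" "j < n"
  shows "(\<Sum>p\<in>{Suc j..n}. (if incr (\<xi> \<circ> ins p) j n then 1 else 0::rat))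
         = (if incr \<xi> (Suc j) n then 1 else 0)"
proof (cases "incr \<xi> (Suc j) n")
  case False
  have "\<not> incr (\<xi> \<circ> ins p) j n" if "p \<in> {Suc j..n}" for p
    using char_big[of j p n \<xi>] that j False by auto
  thus ?thesis using False by (auto intro!: sum.neutral)
next
  case True
  let ?D = "\<lambda>p. (p = Suc j \<or> \<xi> p < \<xi> 1) \<and> (p = n \<or> \<xi> 1 < \<xi> (Suc p))"
  have C: "incr (\<xi> \<circ> ins p) j n \<longleftrightarrow> ?D p" if "p \<in> {Suc j..n}" for p
    using char_big[of j p n \<xi>] that j True by auto
  have I: "\<xi> u < \<xi> v" if "Suc j < u" "u < v" "v \<le> n" for u v
    using True that unfolding incr_def by auto
  have injx: "inj \<xi>" using permutes_inj[OF xi] .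
  define S0 where "S0 = {m\<in>{Suc j..n}. m = Suc j \<or> \<xi> m < \<xi> 1}"
  have fin: "finite S0" unfolding S0_def by simp
  have ne: "Suc j \<in> S0" unfolding S0_def using j by simp
  define p0 where "p0 = Max S0"
  have p0S: "p0 \<in> S0" unfolding p0_def using fin ne by (metis Max_in empty_iff)
  have p0max: "m \<le> p0" if "m \<in> S0" for m unfolding p0_def using fin that by simp
  have p0r: "p0 \<in> {Suc j..n}" using p0S S0_def by simp
  have Dp0: "?D p0"
  proof -
    have 1: "p0 = Suc j \<or> \<xi> p0 < \<xi> 1" using p0S S0_def by simp
    have 2: "\<xi> 1 < \<xi> (Suc p0)" if "p0 \<noteq> n"
    proof -
      have r: "Suc p0 \<in> {Suc j..n}" using p0r that by auto
      have "Suc p0 \<notin> S0" using p0max by fastforce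
      hence a: "\<not> \<xi> (Suc p0) < \<xi> 1" using r S0_def by auto
      have "\<xi> (Suc p0) \<noteq> \<xi> 1" using injx by (metis inj_eq Suc_inject p0r atLeastAtMost_iff not_less_eq_eq Suc_le_mono le0 le_zero_eq zero_less_Suc less_numeral_extra(3) One_nat_def nat.distinct(1))
      thus ?thesis using a by simp
    qed
    show ?thesis using 1 2 by blast
  qed
  have nolt: False if "a \<in> {Suc j..n}" "b \<in> {Suc j..n}" "?D a" "?D b" "a < b" for a b
  proof -
    have "b \<noteq> Suc j" using that by auto
    hence xb: "\<xi> b < \<xi> 1" using that by auto
    have "a \<noteq> n" using that by auto
    hence xa: "\<xi> 1 < \<xi> (Suc a)" using that by auto
    show False
    proof (cases "Suc a = b")
      case True thus False using xa xb by simp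
    next
      case False
      hence "\<xi> (Suc a) < \<xi> b" using I[of "Suc a" b] that by auto
      thus False using xa xb by simp
    qed
  qed
  have set: "{p\<in>{Suc j..n}. incr (\<xi> \<circ> ins p) j n} = {p0}"
  proof
    show "{p0} \<subseteq> {p\<in>{Suc j..n}. incr (\<xi> \<circ> ins p) j n}" using C[OF p0r] Dp0 p0r by simp
    show "{p\<in>{Suc j..n}. incr (\<xi> \<circ> ins p) j n} \<subseteq> {p0}"
    proof
      fix q assume "q \<in> {p\<in>{Suc j..n}. incr (\<xi> \<circ> ins p) j n}"
      hence q: "q \<in> {Suc j..n}" "?D q" using C by auto
      have "\<not> q < p0" using nolt[OF q(1) p0r q(2) Dp0] by blast
      moreover have "\<not> p0 < q" using nolt[OF p0r q(1) Dp0 q(2)] by blast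
      ultimately show "q \<in> {p0}" by simp
    qed
  qed
  have "(\<Sum>p\<in>{Suc j..n}. (if incr (\<xi> \<circ> ins p) j n then 1 else 0::rat))
        = (\<Sum>p\<in>{p\<in>{Suc j..n}. incr (\<xi> \<circ> ins p) j n}. 1)"
    by (rule sum.inter_filter[symmetric]) simp
  also have "\<dots> = 1" unfolding set by simp
  finally show ?thesis using True by simp
qed


lemma step:
  assumes x: "x \<in> perms n" and j: "1 \<le> j" "j \<le> n"
  shows "gmult n (B n 1) (B n j) x = of_nat j * B n j x + (if j < n then B n (Suc j) x else 0)"
proof -
  have xp: "x permutes {1..n}" using x perms_def by simp
  define \<xi> where "\<xi> = inv x"
  have xip: "\<xi> permutes {1..n}" unfolding \<xi>_def using permutes_inv[OF xp] .
  have n: "1 \<le> n" using j by simp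
  have "gmult n (B n 1) (B n j) x = (\<Sum>r\<in>perms n. B n 1 (inv r) * B n j (r \<circ> x))"
    by (rule gmult_left[OF x])
  also have "\<dots> = (\<Sum>r\<in>perms n. if incr r 1 n then B n j (r \<circ> x) else 0)"
  proof (rule sum.cong[OF refl])
    fix r assume "r \<in> perms n"
    hence rp: "r permutes {1..n}" by (simp add: perms_def)
    show "B n 1 (inv r) * B n j (r \<circ> x) = (if incr r 1 n then B n j (r \<circ> x) else 0)"
      using Bchar[OF permutes_inv[OF rp], of 1] permutes_inv_inv[OF rp] by simp
  qed
  also have "\<dots> = (\<Sum>r\<in>{r\<in>perms n. incr r 1 n}. B n j (r \<circ> x))"
    by (rule sum.inter_filter[symmetric]) (rule finite_perms)
  also have "\<dots> = (\<Sum>r\<in>insinv ` {1..n}. B n j (r \<circ> x))" unfolding R1[OF n] ..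
  also have "\<dots> = (\<Sum>p\<in>{1..n}. B n j (insinv p \<circ> x))"
  proof (rule sum.reindex[unfolded comp_def])
    show "inj_on insinv {1..n}"
    proof (rule inj_onI)
      fix p q assume "insinv p = insinv q"
      hence "insinv p 1 = insinv q 1" by simp
      thus "p = q" by (simp add: insinv_def)
    qed
  qed
  also have "\<dots> = (\<Sum>p\<in>{1..n}. if incr (\<xi> \<circ> ins p) j n then 1 else 0)"
  proof (rule sum.cong[OF refl])
    fix p assume p: "p \<in> {1..n}"
    have ip: "insinv p permutes {1..n}" using insinv_permutes[OF p] .
    have cp: "insinv p \<circ> x permutes {1..n}" using permutes_compose[OF xp ip] .
    have "inv (insinv p \<circ> x) = inv x \<circ> inv (insinv p)"
      using o_inv_distrib[OF permutes_bij[OF ip] permutes_bij[OF xp]] .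
    also have "\<dots> = \<xi> \<circ> ins p" using inv_insinv[OF p] \<xi>_def by simp
    finally show "B n j (insinv p \<circ> x) = (if incr (\<xi> \<circ> ins p) j n then 1 else 0)"
      using Bchar[OF cp, of j] by simp
  qed
  also have "\<dots> = (\<Sum>p\<in>{1..j}. if incr (\<xi> \<circ> ins p) j n then 1 else 0)
      + (\<Sum>p\<in>{Suc j..n}. if incr (\<xi> \<circ> ins p) j n then 1 else 0)"
  proof -
    have "{1..n} = {1..j} \<union> {Suc j..n}" using j by auto
    thus ?thesis by (simp add: sum.union_disjoint)
  qed
  also have "(\<Sum>p\<in>{1..j}. if incr (\<xi> \<circ> ins p) j n then 1 else (0::rat)) = of_nat j * B n j x"
  proof -
    have "incr (\<xi> \<circ> ins p) j n = incr \<xi> j n" if "p \<in> {1..j}" for p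
    proof -
      have "ins p u = u" if "j < u" for u using that \<open>p \<in> {1..j}\<close> by (auto simp: ins_def)
      thus ?thesis unfolding incr_def by auto
    qed
    hence "(\<Sum>p\<in>{1..j}. if incr (\<xi> \<circ> ins p) j n then 1 else (0::rat))
        = (\<Sum>p\<in>{1..j}. if incr \<xi> j n then 1 else 0)" by (intro sum.cong) auto
    also have "\<dots> = of_nat j * (if incr \<xi> j n then 1 else 0)" by simp
    finally show ?thesis using Bchar[OF xp, of j] \<xi>_def by simp
  qed
  also have "(\<Sum>p\<in>{Suc j..n}. if incr (\<xi> \<circ> ins p) j n then 1 else (0::rat))
      = (if j < n then B n (Suc j) x else 0)"
  proof (cases "j < n")
    case True
    thus ?thesis using count_big[OF xip j(1) True] Bchar[OF xp, of "Suc j"] \<xi>_def by simp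
  next
    case False thus ?thesis by simp
  qed
  finally show ?thesis .
qed


lemma gmult_gone: "gmult n f gone x = (if x \<in> perms n then f x else 0)"
proof -
  have idp: "id \<in> perms n" by (simp add: perms_def permutes_id)
  have inner: "(\<Sum>\<tau>\<in>perms n. if s \<circ> \<tau> = x then f s * gone \<tau> else 0) = (if s = x then f s else 0)" for s
  proof -
    have "(\<Sum>\<tau>\<in>perms n. if s \<circ> \<tau> = x then f s * gone \<tau> else 0)
        = (\<Sum>\<tau>\<in>perms n. if \<tau> = id then (if s = x then f s else 0) else 0)"
      by (rule sum.cong[OF refl]) (auto simp: gone_def)
    also have "\<dots> = (if s = x then f s else 0)" using idp finite_perms by simp
    finally show ?thesis .
  qed
  show ?thesis unfolding gmult_def inner using finite_perms by (simp add: sum.delta')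
qed

lemma gmult_lin:
  "gmult n f (\<lambda>\<sigma>. \<Sum>j\<in>J. c j * g j \<sigma>) x = (\<Sum>j\<in>J. c j * gmult n f (g j) x)"
proof -
  have e: "(if P then f s * (\<Sum>j\<in>J. c j * g j t) else 0) = (\<Sum>j\<in>J. c j * (if P then f s * g j t else 0))"
    for P s t by (cases P) (auto simp: sum_distrib_left mult_ac)
  show ?thesis unfolding gmult_def e
    by (simp add: sum_distrib_left sum.swap[of _ J])
qed

lemma shift_lemma:
  fixes F :: "nat \<Rightarrow> rat"
  assumes n: "1 \<le> n" and F1: "F 1 = 0"
  shows "(\<Sum>j=1..n. if j < n then F (Suc j) else 0) = (\<Sum>j=1..n. F j)"
proof -
  have "(\<Sum>j=1..n. if j < n then F (Suc j) else 0) = (\<Sum>j\<in>{j\<in>{1..n}. j < n}. F (Suc j))"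
    by (rule sum.inter_filter[symmetric]) simp
  also have "{j\<in>{1..n}. j < n} = {1..n-1}" using n by auto
  finally have L: "(\<Sum>j=1..n. if j < n then F (Suc j) else 0) = (\<Sum>j=1..n-1. F (Suc j))" .
  have "(\<Sum>j=1..n. F j) = F 1 + (\<Sum>j=Suc 1..n. F j)" using n by (rule sum.atLeast_Suc_atMost)
  also have "(\<Sum>j=Suc 1..n. F j) = (\<Sum>j=Suc 1..Suc (n-1). F j)" using n by simp
  also have "\<dots> = (\<Sum>j=1..n-1. F (Suc j))" by (rule sum.shift_bounds_cl_Suc_ivl)
  finally show ?thesis using L F1 by simp
qed

lemma S1: "Stirling 1 j = (if j = 1 then 1 else 0)"
proof (cases j)
  case 0 thus ?thesis by simp
next
  case (Suc m) thus ?thesis by (cases m) auto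
qed

lemma Stirling_rec: "1 \<le> j \<Longrightarrow> Stirling (Suc k) j = j * Stirling k j + Stirling k (j - 1)"
  by (cases j) auto

lemma powlemma:
  assumes n: "1 \<le> n"
  shows "1 \<le> k \<Longrightarrow> gpow n (B n 1) k = (\<lambda>x. \<Sum>j=1..n. of_nat (Stirling k j) * B n j x)"
proof (induction k)
  case 0 thus ?case by simp
next
  case (Suc k)
  show ?case
  proof (cases "k = 0")
    case True
    show ?thesis
    proof
      fix x
      have st: "of_nat (Stirling (Suc 0) j) * B n j x = (if j = Suc 0 then B n (Suc 0) x else 0)" for j
        using S1[of j] by simp
      show "gpow n (B n 1) (Suc k) x = (\<Sum>j=1..n. of_nat (Stirling (Suc k) j) * B n j x)"
        using True n by (simp add: gmult_gone st B_out)
    qed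
  next
    case False
    hence k: "1 \<le> k" by simp
    show ?thesis
    proof
      fix x
      have "gpow n (B n 1) (Suc k) x = gmult n (B n 1) (\<lambda>x. \<Sum>j=1..n. of_nat (Stirling k j) * B n j x) x"
        using Suc.IH[OF k] by simp
      also have "\<dots> = (\<Sum>j=1..n. of_nat (Stirling k j) * gmult n (B n 1) (B n j) x)"
        by (rule gmult_lin)
      also have "\<dots> = (\<Sum>j=1..n. of_nat (Stirling (Suc k) j) * B n j x)"
      proof (cases "x \<in> perms n")
        case False thus ?thesis by (simp add: gmult_out B_out)
      next
        case True
        have "(\<Sum>j=1..n. of_nat (Stirling k j) * gmult n (B n 1) (B n j) x)
           = (\<Sum>j=1..n. of_nat (Stirling k j) * (of_nat j * B n j x + (if j < n then B n (Suc j) x else 0)))"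
        proof (rule sum.cong[OF refl])
          fix j assume "j \<in> {1..n}"
          thus "of_nat (Stirling k j) * gmult n (B n 1) (B n j) x = of_nat (Stirling k j) * (of_nat j * B n j x + (if j < n then B n (Suc j) x else 0))"
            using step[OF True, of j] by simp
        qed
        also have "\<dots> = (\<Sum>j=1..n. of_nat (Stirling k j) * of_nat j * B n j x)
             + (\<Sum>j=1..n. if j < n then of_nat (Stirling k (Suc j - 1)) * B n (Suc j) x else 0)"
          unfolding sum.distrib[symmetric] by (rule sum.cong[OF refl]) (auto simp: algebra_simps)
        also have "(\<Sum>j=1..n. if j < n then of_nat (Stirling k (Suc j - 1)) * B n (Suc j) x else (0::rat))
             = (\<Sum>j=1..n. of_nat (Stirling k (j - 1)) * B n j x)"
          by (rule shift_lemma[OF n, where F="\<lambda>j. of_nat (Stirling k (j - 1)) * B n j x"]) (use k in \<open>cases k, auto\<close>)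
        also have "(\<Sum>j=1..n. of_nat (Stirling k j) * of_nat j * B n j x) + (\<Sum>j=1..n. of_nat (Stirling k (j - 1)) * B n j x)
             = (\<Sum>j=1..n. of_nat (Stirling (Suc k) j) * B n j x)"
          by (simp add: sum.distrib[symmetric] Stirling_rec algebra_simps)
        finally show ?thesis .
      qed
      finally show "gpow n (B n 1) (Suc k) x = (\<Sum>j=1..n. of_nat (Stirling (Suc k) j) * B n j x)" .
    qed
  qed
qed

theorem mainTheorem5:
  fixes n k :: nat
  assumes "1 \<le> n" and "1 \<le> k"
  shows "gpow n (B n 1) k = (\<lambda>\<sigma>. \<Sum>j=1..min k n. of_nat (Stirling k j) * B n j \<sigma>)"
proof
  fix x
  have "(\<Sum>j=1..min k n. of_nat (Stirling k j) * B n j x) = (\<Sum>j=1..n. of_nat (Stirling k j) * B n j x)"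
    by (rule sum.mono_neutral_left) auto
  thus "gpow n (B n 1) k x = (\<Sum>j=1..min k n. of_nat (Stirling k j) * B n j x)"
    using powlemma[OF assms] by simp
qed

end
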